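(* In the setting of the context, for every $\mu\in U$ such that $(\Phi,\mu)$ has no singular connection, every periodic point of $f_\mu$ is regular.
   Context: Let $N\ge2$, $\lambda\in(0,1)$, and $\varphi_1,\dots,\varphi_N\colon[0,1]\to[0,1]$ bi-Lipschitz with Lipschitz constant $\le\lambda$, $\Phi=\{\varphi_i\}$, and assume $\varphi_i([0,1])\subset(0,1)$ for every $i$. Let $U=\{\mu=(\mu_1,\dots,\mu_{N-1}):0<\mu_1<\cdots<\mu_{N-1}<1\}$, $\mu_0=0$, $\mu_N=1$. For $\mu\in U$, $f_\mu\colon[0,1]\to[0,1]$ satisfies $f_\mu=\varphi_i$ on $A_{i,\mu}=(\mu_{i-1},\mu_i)$, $i=1,\dots,N$, and at each point of the singular set $S_\mu=\{0,\mu_1,\dots,\mu_{N-1},1\}$, $f_\mu$ is either left continuous or right continuous. A point is regular if its forward $f_\mu$-orbit never meets $S_\mu$. For $\alpha=(i_0,\dots,i_{n-1})$, $\varphi^\alpha=\varphi_{i_{n-1}}\circ\cdots\circ\varphi_{i_0}$; $(\Phi,\mu)$ has a singular connection if $\varphi^\alpha(\mu_i)=\mu_j$ for some $n\ge1$, $\alpha\in\{1,\dots,N\}^n$, $i,j\in\{1,\dots,N-1\}$. *)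

theory Defs
  imports "HOL-Analysis.Analysis"
begin

text \<open>The maps \<phi>_1..\<phi>_N are given as \<phi> :: nat \<Rightarrow> real \<Rightarrow> real, indices 1..N.
  The parameter \<mu> is nat \<Rightarrow> real with \<mu> 0 = 0 and \<mu> N = 1.\<close>

definition in_U :: "nat \<Rightarrow> (nat \<Rightarrow> real) \<Rightarrow> bool" where
  "in_U N \<mu> \<longleftrightarrow> \<mu> 0 = 0 \<and> \<mu> N = 1 \<and> (\<forall>i<N. \<mu> i < \<mu> (Suc i))"

definition singular_set :: "nat \<Rightarrow> (nat \<Rightarrow> real) \<Rightarrow> real set" where
  "singular_set N \<mu> = \<mu> ` {0..N}"

text \<open>\<phi>^\<alpha> = \<phi>_{i_{n-1}} \<circ> ... \<circ> \<phi>_{i_0} for \<alpha> = [i_0,...,i_{n-1}].\<close>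
definition phi_word :: "(nat \<Rightarrow> real \<Rightarrow> real) \<Rightarrow> nat list \<Rightarrow> real \<Rightarrow> real" where
  "phi_word \<phi> \<alpha> x = foldl (\<lambda>y k. \<phi> k y) x \<alpha>"

definition has_singular_connection ::
  "nat \<Rightarrow> (nat \<Rightarrow> real \<Rightarrow> real) \<Rightarrow> (nat \<Rightarrow> real) \<Rightarrow> bool" where
  "has_singular_connection N \<phi> \<mu> \<longleftrightarrow>
     (\<exists>\<alpha> i j. length \<alpha> \<ge> 1 \<and> set \<alpha> \<subseteq> {1..N} \<and> i \<in> {1..N-1} \<and> j \<in> {1..N-1}
        \<and> phi_word \<phi> \<alpha> (\<mu> i) = \<mu> j)"

definition is_f_mu ::
  "nat \<Rightarrow> (nat \<Rightarrow> real \<Rightarrow> real) \<Rightarrow> (nat \<Rightarrow> real) \<Rightarrow> (real \<Rightarrow> real) \<Rightarrow> bool" where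
  "is_f_mu N \<phi> \<mu> f \<longleftrightarrow>
     f ` {0..1} \<subseteq> {0..1} \<and>
     (\<forall>i\<in>{1..N}. \<forall>x\<in>{\<mu> (i-1)<..<\<mu> i}. f x = \<phi> i x) \<and>
     (\<forall>x\<in>singular_set N \<mu>.
        (0 < x \<and> continuous (at x within {0..x}) f) \<or>
        (x < 1 \<and> continuous (at x within {x..1}) f))"

definition regular_point ::
  "nat \<Rightarrow> (nat \<Rightarrow> real) \<Rightarrow> (real \<Rightarrow> real) \<Rightarrow> real \<Rightarrow> bool" where
  "regular_point N \<mu> f x \<longleftrightarrow> (\<forall>k. (f ^^ k) x \<notin> singular_set N \<mu>)"

definition periodic_point :: "(real \<Rightarrow> real) \<Rightarrow> real \<Rightarrow> bool" where
  "periodic_point f x \<longleftrightarrow> x \<in> {0..1} \<and> (\<exists>n\<ge>1. (f ^^ n) x = x)"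

definition bi_lipschitz_on :: "real set \<Rightarrow> (real \<Rightarrow> real) \<Rightarrow> bool" where
  "bi_lipschitz_on S g \<longleftrightarrow> (\<exists>L c. c > 0 \<and> (\<forall>x\<in>S. \<forall>y\<in>S.
      c * \<bar>x - y\<bar> \<le> \<bar>g x - g y\<bar> \<and> \<bar>g x - g y\<bar> \<le> L * \<bar>x - y\<bar>))"

end

theory Submission
  imports Defs
begin

lemma left_eq:
  fixes f g :: "real \<Rightarrow> real"
  assumes "a < y" "0 < y" "continuous (at y within {0..y}) f" "continuous (at y within {0..y}) g"
    "\<forall>t\<in>{a<..<y}. f t = g t"
  shows "f y = g y"
proof -
  have e: "at y within {0..y} = at_left y" using assms(2) by (rule at_within_Icc_at_left)
  have F: "(f \<longlongrightarrow> f y) (at_left y)" using assms(3) e by (simp add: continuous_within)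
  have G: "(g \<longlongrightarrow> g y) (at_left y)" using assms(4) e by (simp add: continuous_within)
  have ev: "eventually (\<lambda>t. g t = f t) (at_left y)"
    using eventually_at_left_real[OF assms(1)] assms(5) by (auto elim: eventually_mono)
  have "(f \<longlongrightarrow> g y) (at_left y)" using G ev by (rule Lim_transform_eventually)
  then show ?thesis using F tendsto_unique[OF trivial_limit_at_left_real] by metis
qed

lemma right_eq:
  fixes f g :: "real \<Rightarrow> real"
  assumes "y < b" "y < 1" "continuous (at y within {y..1}) f" "continuous (at y within {y..1}) g"
    "\<forall>t\<in>{y<..<b}. f t = g t"
  shows "f y = g y"
proof -
  have e: "at y within {y..1} = at_right y" using assms(2) by (rule at_within_Icc_at_right)
  have F: "(f \<longlongrightarrow> f y) (at_right y)" using assms(3) e by (simp add: continuous_within)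
  have G: "(g \<longlongrightarrow> g y) (at_right y)" using assms(4) e by (simp add: continuous_within)
  have ev: "eventually (\<lambda>t. g t = f t) (at_right y)"
    using eventually_at_right_real[OF assms(1)] assms(5) by (auto elim: eventually_mono)
  have "(f \<longlongrightarrow> g y) (at_right y)" using G ev by (rule Lim_transform_eventually)
  then show ?thesis using F tendsto_unique[OF trivial_limit_at_right_real] by metis
qed

lemma mu_mono:
  assumes "in_U N \<mu>" "i < j" "j \<le> N"
  shows "\<mu> i < \<mu> j"
  using assms(2,3)
proof (induction j)
  case 0 then show ?case by simp
next
  case (Suc j)
  have s: "\<mu> j < \<mu> (Suc j)" using assms(1) Suc.prems by (simp add: in_U_def)
  show ?case
  proof (cases "i = j")
    case True then show ?thesis using s by simp
  next
    case False then show ?thesis using Suc s by force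
  qed
qed

lemma mu_le:
  assumes "in_U N \<mu>" "i \<le> j" "j \<le> N"
  shows "\<mu> i \<le> \<mu> j"
  using mu_mono[OF assms(1) _ assms(3), of i] assms(2) by (cases "i = j") auto

lemma mu_interval:
  assumes U: "in_U N \<mu>" and y: "y \<in> {0..1}" and ns: "y \<notin> \<mu> ` {0..N}"
  shows "\<exists>i\<in>{1..N}. \<mu> (i-1) < y \<and> y < \<mu> i"
proof -
  have N1: "\<mu> N = 1" "\<mu> 0 = 0" using U by (auto simp: in_U_def)
  have yN: "y < \<mu> N" using y ns N1 by (cases "y = 1") auto
  define i where "i = (LEAST i. y < \<mu> i)"
  have yi: "y < \<mu> i" unfolding i_def using yN by (rule LeastI)
  have iN: "i \<le> N" unfolding i_def using yN by (rule Least_le)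
  have i0: "i \<noteq> 0" using yi N1 y by (cases "i = 0") auto
  have "\<not> y < \<mu> (i-1)" unfolding i_def using i0 i_def
    by (metis diff_less not_less_Least zero_less_iff_neq_zero zero_less_one)
  moreover have "y \<noteq> \<mu> (i-1)" using ns iN by auto
  ultimately have "\<mu> (i-1) < y" by auto
  then show ?thesis using yi iN i0 by auto
qed

lemma f_step:
  assumes U: "in_U N \<mu>"
    and L: "\<And>i. i \<in> {1..N} \<Longrightarrow> lam-lipschitz_on {0..1} (\<phi> i)"
    and F: "is_f_mu N \<phi> \<mu> f"
    and y: "y \<in> {0..1}"
  shows "\<exists>j\<in>{1..N}. f y = \<phi> j y"
proof (cases "y \<in> \<mu> ` {0..N}")
  case False
  then obtain i where i: "i \<in> {1..N}" "\<mu> (i-1) < y" "y < \<mu> i" using mu_interval[OF U y] by blast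
  then show ?thesis using F unfolding is_f_mu_def by auto
next
  case True
  then obtain m where m: "m \<le> N" "y = \<mu> m" by auto
  have N1: "\<mu> N = 1" "\<mu> 0 = 0" using U by (auto simp: in_U_def)
  have cont: "\<And>j S. j \<in> {1..N} \<Longrightarrow> S \<subseteq> {0..1} \<Longrightarrow> continuous (at y within S) (\<phi> j)"
    using L y by (meson continuous_within_subset lipschitz_on_continuous_within)
  have "(0 < y \<and> continuous (at y within {0..y}) f) \<or> (y < 1 \<and> continuous (at y within {y..1}) f)"
    using F True unfolding is_f_mu_def singular_set_def by blast
  then show ?thesis
  proof
    assume a: "0 < y \<and> continuous (at y within {0..y}) f"
    then have m0: "m \<noteq> 0" using m N1 by (cases "m = 0") auto
    have lt: "\<mu> (m-1) < y" using mu_mono[OF U, of "m-1" m] m m0 by auto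
    have jm: "m \<in> {1..N}" using m m0 by auto
    have "\<forall>t\<in>{\<mu> (m-1)<..<y}. f t = \<phi> m t" using F jm m unfolding is_f_mu_def by auto
    then have "f y = \<phi> m y" using left_eq[OF lt _ _ cont[OF jm]] a y by auto
    then show ?thesis using jm by blast
  next
    assume a: "y < 1 \<and> continuous (at y within {y..1}) f"
    then have mN: "m < N" using m N1 by (cases "m = N") auto
    have lt: "y < \<mu> (Suc m)" using mu_mono[OF U, of m "Suc m"] m mN by auto
    have jm: "Suc m \<in> {1..N}" using mN by auto
    have "\<forall>t\<in>{y<..<\<mu> (Suc m)}. f t = \<phi> (Suc m) t" using F jm m unfolding is_f_mu_def by force
    then have "f y = \<phi> (Suc m) y" using right_eq[OF lt _ _ cont[OF jm]] a y by auto
    then show ?thesis using jm by blast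
  qed
qed

theorem lemma4p4:
  fixes N :: nat and lam :: real and \<phi> :: "nat \<Rightarrow> real \<Rightarrow> real"
    and \<mu> :: "nat \<Rightarrow> real" and f :: "real \<Rightarrow> real" and x :: real
  assumes "N \<ge> 2"
    and "0 < lam" and "lam < 1"
    and "\<And>i. i \<in> {1..N} \<Longrightarrow> bi_lipschitz_on {0..1} (\<phi> i)"
    and "\<And>i. i \<in> {1..N} \<Longrightarrow> lam-lipschitz_on {0..1} (\<phi> i)"
    and "\<And>i. i \<in> {1..N} \<Longrightarrow> \<phi> i ` {0..1} \<subseteq> {0<..<1}"
    and "in_U N \<mu>"
    and "\<not> has_singular_connection N \<phi> \<mu>"
    and "is_f_mu N \<phi> \<mu> f"
    and "periodic_point f x"
  shows "regular_point N \<mu> f x"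
proof -
  note step = f_step[OF assms(7) assms(5) assms(9)]
  have fin: "\<And>y. y \<in> {0..1} \<Longrightarrow> f y \<in> {0<..<1}"
  proof -
    fix y :: real assume y: "y \<in> {0..1}"
    then obtain j where "j \<in> {1..N}" "f y = \<phi> j y" using step by blast
    then show "f y \<in> {0<..<1}" using assms(6) y by blast
  qed
  have orb: "\<And>k y. y \<in> {0..1} \<Longrightarrow> (f ^^ k) y \<in> {0..1}"
  proof -
    fix k and y :: real assume "y \<in> {0..1}"
    then show "(f ^^ k) y \<in> {0..1}" by (induction k) (use fin in force)+
  qed
  have word: "\<And>n z. z \<in> {0..1} \<Longrightarrow> \<exists>\<alpha>. length \<alpha> = n \<and> set \<alpha> \<subseteq> {1..N} \<and> (f ^^ n) z = phi_word \<phi> \<alpha> z"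
  proof -
    fix n and z :: real assume z: "z \<in> {0..1}"
    show "\<exists>\<alpha>. length \<alpha> = n \<and> set \<alpha> \<subseteq> {1..N} \<and> (f ^^ n) z = phi_word \<phi> \<alpha> z"
    proof (induction n)
      case 0 show ?case by (rule exI[of _ "[]"]) (simp add: phi_word_def)
    next
      case (Suc n)
      then obtain \<alpha> where a: "length \<alpha> = n" "set \<alpha> \<subseteq> {1..N}" "(f ^^ n) z = phi_word \<phi> \<alpha> z" by blast
      obtain j where j: "j \<in> {1..N}" "f ((f ^^ n) z) = \<phi> j ((f ^^ n) z)" using step orb[OF z] by blast
      show ?case
        by (rule exI[of _ "\<alpha> @ [j]"]) (use a j in \<open>simp add: phi_word_def\<close>)
    qed
  qed
  obtain n where n: "n \<ge> 1" "(f ^^ n) x = x" "x \<in> {0..1}" using assms(10) unfolding periodic_point_def by blast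
  show ?thesis
    unfolding regular_point_def
  proof
    fix k
    show "(f ^^ k) x \<notin> singular_set N \<mu>"
    proof
      assume "(f ^^ k) x \<in> singular_set N \<mu>"
      then obtain m where m: "m \<le> N" "(f ^^ k) x = \<mu> m" unfolding singular_set_def by auto
      define z where "z = (f ^^ k) x"
      have z: "z \<in> {0..1}" unfolding z_def using orb n by blast
      have zp: "(f ^^ n) z = z"
      proof -
        have "(f ^^ n) z = (f ^^ (n + k)) x" unfolding z_def by (simp add: funpow_add)
        also have "\<dots> = (f ^^ (k + n)) x" by (simp add: add.commute)
        also have "\<dots> = z" unfolding z_def by (simp add: funpow_add n)
        finally show ?thesis .
      qed
      have "(f ^^ n) z = f ((f ^^ (n-1)) z)" using n(1)
        by (metis Suc_diff_1 comp_apply funpow.simps(2) less_le_trans zero_less_one)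
      then have z01: "z \<in> {0<..<1}" using zp fin orb[OF z] by metis
      have N1: "\<mu> N = 1" "\<mu> 0 = 0" using assms(7) by (auto simp: in_U_def)
      have mm: "m \<in> {1..N-1}" using m z01 N1 unfolding z_def
        by (cases "m = 0"; cases "m = N") auto
      obtain \<alpha> where a: "length \<alpha> = n" "set \<alpha> \<subseteq> {1..N}" "(f ^^ n) z = phi_word \<phi> \<alpha> z"
        using word[OF z] by blast
      have "has_singular_connection N \<phi> \<mu>"
        unfolding has_singular_connection_def
        using a n(1) mm zp m(2) unfolding z_def by metis
      then show False using assms(8) by blast
    qed
  qed
qed

end
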